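(* In the single-item environment with $n$ real bidders whose values are drawn i.i.d. from the exponential distribution with mean $1$, a collateral equal to the monopoly reserve $1$ is necessary for the Deferred-Revelation Auction (DRA) over a public ledger, as described in the context, to be credible; that is, the DRA is not credible for any collateral $f<1$.
   Context: Bidders are quasi-linear with independent values; the exponential distribution with mean $1$ has CDF $1-e^{-t}$, virtual value $\varphi(v)=v-1$, monopoly reserve $1$. In the single-item environment at most one bidder may be allocated. DRA over a public ledger (visible to all) with a perfectly hiding, perfectly binding, non-malleable commitment scheme: (1) every participant (real bidders and any fake bids fabricated by the auctioneer) commits to an identifier and a bid and deposits collateral $f$; the auctioneer declares a matroid feasibility constraint $\hat{\mathcal{F}}$ and distributions $\hat D_j$ (virtual values $\hat\varphi_j$) for all committed bids; (2) each committed bid is revealed or concealed, and collateral of concealed bids is burnt; (3) among revealed bids, the set $S\in\hat{\mathcal{F}}$ maximizing $\sum_{i\in S}\hat\varphi_i(b_i)$ (lexicographic tie-breaking) is allocated, each allocated bidder paying its critical bid. The auctioneer may fabricate bids, misreport distributions and constraint (keeping the allocated real bidders feasible in the true constraint), and choose which fake bids to conceal after seeing revealed real bids. Its revenue is real bidders' payments minus burnt collateral of its concealed fake bids. The DRA is credible for collateral $f$ if, when real bidders bid truthfully, the auctioneer maximizes expected revenue by fabricating no bids and reporting true distributions and constraint. *)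

theory Defs
  imports "HOL-Probability.Probability"
begin

definition matroid :: "'a set \<Rightarrow> 'a set set \<Rightarrow> bool" where
  "matroid E F \<longleftrightarrow> finite E \<and> (\<forall>S\<in>F. S \<subseteq> E) \<and> {} \<in> F
     \<and> (\<forall>A B. B \<in> F \<longrightarrow> A \<subseteq> B \<longrightarrow> A \<in> F)
     \<and> (\<forall>A\<in>F. \<forall>B\<in>F. card A < card B \<longrightarrow> (\<exists>x\<in>B - A. insert x A \<in> F))"

text \<open>Bids (committed participants) are identified by natural numbers; real bidders are
  0,...,n-1, fake bids n,...,n+m-1.  Lexicographic tie-breaking: among two distinct sets,
  the one containing the smallest element of their symmetric difference is preferred.\<close>

definition lex_pref :: "nat set \<Rightarrow> nat set \<Rightarrow> bool" where
  "lex_pref S T \<longleftrightarrow> S \<noteq> T \<and> Min ((S - T) \<union> (T - S)) \<in> S"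

definition candidates :: "nat set set \<Rightarrow> nat set \<Rightarrow> nat set set" where
  "candidates F R = {S \<in> F. S \<subseteq> R}"

text \<open>phi j is the declared virtual-value function of bid j, b the bid vector.\<close>
definition alloc :: "nat set set \<Rightarrow> (nat \<Rightarrow> real \<Rightarrow> real) \<Rightarrow> (nat \<Rightarrow> real) \<Rightarrow> nat set \<Rightarrow> nat set" where
  "alloc F phi b R = (THE S. S \<in> candidates F R \<and>
      (\<forall>T\<in>candidates F R. T \<noteq> S \<longrightarrow>
          (\<Sum>i\<in>T. phi i (b i)) < (\<Sum>i\<in>S. phi i (b i))
        \<or> ((\<Sum>i\<in>T. phi i (b i)) = (\<Sum>i\<in>S. phi i (b i)) \<and> lex_pref S T)))"

definition critical_bid :: "nat set set \<Rightarrow> (nat \<Rightarrow> real \<Rightarrow> real) \<Rightarrow> (nat \<Rightarrow> real) \<Rightarrow> nat set \<Rightarrow> nat \<Rightarrow> real" where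
  "critical_bid F phi b R i = Inf {x. 0 \<le> x \<and> i \<in> alloc F phi (b(i := x)) R}"

record strategy =
  nfake   :: nat
  fakebid :: "nat \<Rightarrow> real"               \<comment> \<open>committed value of fake bid j (j \<ge> n)\<close>
  vval    :: "nat \<Rightarrow> real \<Rightarrow> real"
  feas    :: "nat set set"
  conceal :: "(nat \<Rightarrow> real) \<Rightarrow> nat set"  \<comment> \<open>fake bids concealed, given the revealed real bids\<close>

definition valid_strategy :: "nat \<Rightarrow> strategy \<Rightarrow> bool" where
  "valid_strategy n \<sigma> \<longleftrightarrow>
     matroid {..<n + nfake \<sigma>} (feas \<sigma>)
   \<and> (\<forall>S\<in>feas \<sigma>. card (S \<inter> {..<n}) \<le> 1)
   \<and> (\<forall>j. mono (vval \<sigma> j))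
   \<and> (\<forall>v. conceal \<sigma> v \<subseteq> {n..<n + nfake \<sigma>})"

definition bids :: "nat \<Rightarrow> strategy \<Rightarrow> (nat \<Rightarrow> real) \<Rightarrow> nat \<Rightarrow> real" where
  "bids n \<sigma> v i = (if i < n then v i else fakebid \<sigma> i)"

definition revealed :: "nat \<Rightarrow> strategy \<Rightarrow> (nat \<Rightarrow> real) \<Rightarrow> nat set" where
  "revealed n \<sigma> v = {..<n + nfake \<sigma>} - conceal \<sigma> v"

text \<open>Auctioneer revenue: payments of allocated real bidders minus burnt collateral of
  concealed fake bids.\<close>
definition DRA_revenue :: "nat \<Rightarrow> real \<Rightarrow> strategy \<Rightarrow> (nat \<Rightarrow> real) \<Rightarrow> real" where
  "DRA_revenue n f \<sigma> v =
     (let b = bids n \<sigma> v; R = revealed n \<sigma> v;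
          A = alloc (feas \<sigma>) (vval \<sigma>) b R
      in (\<Sum>i\<in>A \<inter> {..<n}. critical_bid (feas \<sigma>) (vval \<sigma>) b R i)
         - f * real (card (conceal \<sigma> v)))"

abbreviation exp1 :: "real measure" where
  "exp1 \<equiv> density lborel (exponential_density 1)"

definition expected_revenue :: "nat \<Rightarrow> real \<Rightarrow> strategy \<Rightarrow> real" where
  "expected_revenue n f \<sigma> = (\<integral>v. DRA_revenue n f \<sigma> v \<partial>(PiM {..<n} (\<lambda>_. exp1)))"

text \<open>Honest behaviour: no fake bids, true distributions (virtual value v - 1 for Exp(1)),
  true single-item constraint, nothing concealed.\<close>
definition honest :: "nat \<Rightarrow> strategy" where
  "honest n = \<lparr> nfake = 0, fakebid = (\<lambda>_. 0), vval = (\<lambda>_ x. x - 1),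
               feas = {S. S \<subseteq> {..<n} \<and> card S \<le> 1}, conceal = (\<lambda>_. {}) \<rparr>"

definition DRA_credible :: "nat \<Rightarrow> real \<Rightarrow> bool" where
  "DRA_credible n f \<longleftrightarrow>
     (\<forall>\<sigma>. valid_strategy n \<sigma> \<longrightarrow> expected_revenue n f \<sigma> \<le> expected_revenue n f (honest n))"

end

theory Submission
  imports Defs
begin

definition SI :: "nat set \<Rightarrow> nat set set" where "SI U = {S. S \<subseteq> U \<and> card S \<le> 1}"

abbreviation phi1 :: "nat \<Rightarrow> real \<Rightarrow> real" where "phi1 \<equiv> (\<lambda>_ x. x - 1)"

lemma card_le1_cases:
  assumes "finite S" "card S \<le> 1" shows "S = {} \<or> (\<exists>i. S = {i})"
proof (cases "card S = 0")
  case True then show ?thesis using assms by simp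
next
  case False then have "card S = 1" using assms by linarith
  then obtain x where "S = {x}" by (rule card_1_singletonE)
  then show ?thesis by blast
qed

lemma cand_SI:
  assumes "finite U" "R \<subseteq> U"
  shows "candidates (SI U) R = insert {} ((\<lambda>i. {i}) ` R)"
proof (rule set_eqI, rule iffI)
  fix S assume "S \<in> candidates (SI U) R"
  then have "S \<subseteq> R" "card S \<le> 1" unfolding candidates_def SI_def by auto
  moreover have "finite S" using finite_subset[OF \<open>S \<subseteq> R\<close> finite_subset[OF assms(2) assms(1)]] .
  ultimately show "S \<in> insert {} ((\<lambda>i. {i}) ` R)" using card_le1_cases by blast
next
  fix S assume "S \<in> insert {} ((\<lambda>i. {i}) ` R)"
  then show "S \<in> candidates (SI U) R" using assms unfolding candidates_def SI_def by auto
qed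

lemma lex_asym: "finite S \<Longrightarrow> finite T \<Longrightarrow> lex_pref S T \<Longrightarrow> lex_pref T S \<Longrightarrow> False"
proof -
  assume f: "finite S" "finite T" and a: "lex_pref S T" and b: "lex_pref T S"
  let ?X = "(S - T) \<union> (T - S)"
  have "?X \<noteq> {}" using a unfolding lex_pref_def by auto
  then have "Min ?X \<in> ?X" using f by (intro Min_in) auto
  moreover have "(T - S) \<union> (S - T) = ?X" by auto
  ultimately show False using a b unfolding lex_pref_def by auto
qed

definition better :: "(nat \<Rightarrow> real \<Rightarrow> real) \<Rightarrow> (nat \<Rightarrow> real) \<Rightarrow> nat set \<Rightarrow> nat set \<Rightarrow> bool" where
  "better phi b S T \<longleftrightarrow> (\<Sum>i\<in>T. phi i (b i)) < (\<Sum>i\<in>S. phi i (b i))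
        \<or> ((\<Sum>i\<in>T. phi i (b i)) = (\<Sum>i\<in>S. phi i (b i)) \<and> lex_pref S T)"

lemma alloc_eqI:
  assumes fin: "\<And>T. T \<in> candidates F R \<Longrightarrow> finite T"
    and S: "S \<in> candidates F R" and best: "\<And>T. T \<in> candidates F R \<Longrightarrow> T \<noteq> S \<Longrightarrow> better phi b S T"
  shows "alloc F phi b R = S"
  unfolding alloc_def
proof (rule the_equality)
  show "S \<in> candidates F R \<and> (\<forall>T\<in>candidates F R. T \<noteq> S \<longrightarrow>
          (\<Sum>i\<in>T. phi i (b i)) < (\<Sum>i\<in>S. phi i (b i))
        \<or> ((\<Sum>i\<in>T. phi i (b i)) = (\<Sum>i\<in>S. phi i (b i)) \<and> lex_pref S T))"
    using S best unfolding better_def by blast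
next
  fix S' assume H: "S' \<in> candidates F R \<and> (\<forall>T\<in>candidates F R. T \<noteq> S' \<longrightarrow>
          (\<Sum>i\<in>T. phi i (b i)) < (\<Sum>i\<in>S'. phi i (b i))
        \<or> ((\<Sum>i\<in>T. phi i (b i)) = (\<Sum>i\<in>S'. phi i (b i)) \<and> lex_pref S' T))"
  show "S' = S"
  proof (rule ccontr)
    assume ne: "S' \<noteq> S"
    have 1: "better phi b S S'" using best H ne by blast
    have 2: "better phi b S' S" using H S ne unfolding better_def by auto
    show False using 1 2 lex_asym[of S S'] fin H S unfolding better_def by auto
  qed
qed

lemma alloc_SI_pos:
  assumes U: "finite U" "R \<subseteq> U" and w: "w \<in> R" "1 \<le> b w"
    and mx: "\<And>j. j \<in> R \<Longrightarrow> b j \<le> b w" and lst: "\<And>j. j \<in> R \<Longrightarrow> j < w \<Longrightarrow> b j < b w"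
  shows "alloc (SI U) phi1 b R = {w}"
proof (rule alloc_eqI)
  show "\<And>T. T \<in> candidates (SI U) R \<Longrightarrow> finite T" using cand_SI[OF U] by auto
  show "{w} \<in> candidates (SI U) R" using cand_SI[OF U] w by auto
  fix T assume T: "T \<in> candidates (SI U) R" "T \<noteq> {w}"
  then consider "T = {}" | j where "j \<in> R" "T = {j}" "j \<noteq> w" using cand_SI[OF U] by auto
  then show "better phi1 b {w} T"
  proof cases
    case 1 then show ?thesis using w unfolding better_def lex_pref_def by auto
  next
    case 2
    show ?thesis
    proof (cases "b j < b w")
      case True then show ?thesis using 2 unfolding better_def by auto
    next
      case False
      then have "b j = b w" using mx[OF 2(1)] by auto
      moreover have "w < j" using lst[OF 2(1)] False 2(3) by (meson linorder_neqE_nat)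
      moreover have "Min (({w} - {j}) \<union> ({j} - {w})) = w" using 2(3) \<open>w < j\<close> by auto
      ultimately show ?thesis using 2 unfolding better_def lex_pref_def by auto
    qed
  qed
qed

lemma alloc_SI_neg:
  assumes U: "finite U" "R \<subseteq> U" and lt: "\<And>j. j \<in> R \<Longrightarrow> b j < 1"
  shows "alloc (SI U) phi1 b R = {}"
proof (rule alloc_eqI)
  show "\<And>T. T \<in> candidates (SI U) R \<Longrightarrow> finite T" using cand_SI[OF U] by auto
  show "{} \<in> candidates (SI U) R" using cand_SI[OF U] by auto
  fix T assume T: "T \<in> candidates (SI U) R" "T \<noteq> {}"
  then obtain j where "j \<in> R" "T = {j}" using cand_SI[OF U] by auto
  then show "better phi1 b {} T" using lt unfolding better_def by auto
qed

lemma exists_winner: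
  fixes b :: "nat \<Rightarrow> real"
  assumes "finite R" "R \<noteq> {}"
  shows "\<exists>w\<in>R. (\<forall>j\<in>R. b j \<le> b w) \<and> (\<forall>j\<in>R. j < w \<longrightarrow> b j < b w)"
proof -
  let ?M = "Max (b ` R)"
  let ?W = "{j\<in>R. b j = ?M}"
  have "?M \<in> b ` R" using assms by (intro Max_in) auto
  then have Wne: "?W \<noteq> {}" by auto
  have Wf: "finite ?W" using assms by auto
  define w where "w = Min ?W"
  have wW: "w \<in> ?W" unfolding w_def using Wne Wf by (intro Min_in)
  have "\<forall>j\<in>R. b j \<le> b w" using wW assms by auto
  moreover have "\<forall>j\<in>R. j < w \<longrightarrow> b j < b w"
  proof (intro ballI impI)
    fix j assume j: "j \<in> R" "j < w"
    have "b j \<le> ?M" using j assms by auto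
    moreover have "b j \<noteq> ?M"
    proof
      assume "b j = ?M" then have "j \<in> ?W" using j by auto
      then have "w \<le> j" unfolding w_def using Wf by auto
      then show False using j by auto
    qed
    ultimately show "b j < b w" using wW by auto
  qed
  moreover have "w \<in> R" using wW by auto
  ultimately show ?thesis by blast
qed

lemma alloc_SI_mem:
  assumes U: "finite U" "R \<subseteq> U" and w: "w \<in> alloc (SI U) phi1 b R"
  shows "w \<in> R \<and> 1 \<le> b w \<and> (\<forall>j\<in>R. b j \<le> b w)"
proof (cases "\<exists>j\<in>R. 1 \<le> b j")
  case True
  have fR: "finite R" using finite_subset[OF U(2) U(1)] .
  then obtain w0 where w0: "w0 \<in> R" "\<forall>j\<in>R. b j \<le> b w0" "\<forall>j\<in>R. j < w0 \<longrightarrow> b j < b w0"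
    using exists_winner[of R b] True by blast
  have "1 \<le> b w0" using True w0 by force
  then have "alloc (SI U) phi1 b R = {w0}" using alloc_SI_pos[OF U w0(1)] w0 by blast
  then show ?thesis using w w0 \<open>1 \<le> b w0\<close> by auto
next
  case False
  then have "alloc (SI U) phi1 b R = {}" using alloc_SI_neg[OF U] by force
  then show ?thesis using w by auto
qed

lemma crit_SI:
  assumes U: "finite U" "R \<subseteq> U" and w: "w \<in> R" "1 \<le> b w"
    and mx: "\<And>j. j \<in> R \<Longrightarrow> b j \<le> b w" and lst: "\<And>j. j \<in> R \<Longrightarrow> j < w \<Longrightarrow> b j < b w"
  shows "critical_bid (SI U) phi1 b R w = Max (insert 1 (b ` (R - {w})))"
proof -
  have fR: "finite R" using finite_subset[OF U(2) U(1)] .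
  let ?m = "Max (insert 1 (b ` (R - {w})))"
  let ?X = "{x. 0 \<le> x \<and> w \<in> alloc (SI U) phi1 (b(w := x)) R}"
  have m1: "1 \<le> ?m" using fR by auto
  have up: "x \<in> ?X" if x: "?m < x" for x
  proof -
    have le: "b j < x" if "j \<in> R" "j \<noteq> w" for j
    proof -
      have "b j \<le> ?m" using that fR by auto
      then show ?thesis using x by auto
    qed
    have "alloc (SI U) phi1 (b(w := x)) R = {w}"
      by (rule alloc_SI_pos[OF U w(1)]) (use x m1 le in \<open>auto simp: less_imp_le\<close>)
    then show ?thesis using x m1 by auto
  qed
  have low: "?m \<le> x" if x: "x \<in> ?X" for x
  proof -
    have A: "1 \<le> x \<and> (\<forall>j\<in>R. (b(w := x)) j \<le> x)"
      using alloc_SI_mem[OF U, of w "b(w := x)"] x by auto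
    then have "1 \<le> x" by simp
    have "\<forall>j\<in>R - {w}. b j \<le> x" using A by (metis fun_upd_other DiffE singletonI)
    then show ?thesis using fR \<open>1 \<le> x\<close> by (auto simp: Max_le_iff)
  qed
  have ne: "?X \<noteq> {}" using up[of "?m + 1"] by auto
  have bdd: "bdd_below ?X" using low by (auto intro: bdd_belowI)
  have "?m \<le> Inf ?X" using ne low by (intro cInf_greatest) auto
  moreover have "Inf ?X \<le> ?m"
  proof (rule ccontr)
    assume "\<not> Inf ?X \<le> ?m"
    then have "?m < Inf ?X" by simp
    let ?x = "(?m + Inf ?X) / 2"
    have "?m < ?x" using \<open>?m < Inf ?X\<close> by auto
    then have "?x \<in> ?X" by (rule up)
    then have "Inf ?X \<le> ?x" using bdd by (intro cInf_lower)
    then show False using \<open>?m < Inf ?X\<close> by auto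
  qed
  ultimately show ?thesis unfolding critical_bid_def by auto
qed

definition Mx :: "nat \<Rightarrow> (nat \<Rightarrow> real) \<Rightarrow> real" where "Mx n v = Max (v ` {..<n})"
definition mm :: "nat \<Rightarrow> (nat \<Rightarrow> real) \<Rightarrow> nat \<Rightarrow> real" where
  "mm n v i = Max (insert 1 (v ` ({..<n} - {i})))"
definition Hf :: "nat \<Rightarrow> (nat \<Rightarrow> real) \<Rightarrow> real" where
  "Hf n v = (if 1 \<le> Mx n v then Min (mm n v ` {..<n}) else 0)"
definition dev :: "nat \<Rightarrow> real \<Rightarrow> strategy" where
  "dev n e = \<lparr>nfake = 1, fakebid = (\<lambda>_. 1 + e), vval = phi1, feas = SI {..<n+1},
     conceal = (\<lambda>v. if 1 \<le> Mx n v \<and> Mx n v \<le> 1 + e then {n} else {})\<rparr>"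

lemma sum_single:
  assumes U: "finite U" "R \<subseteq> U" and w: "w \<in> R" "1 \<le> b w"
    and mx: "\<And>j. j \<in> R \<Longrightarrow> b j \<le> b w" and lst: "\<And>j. j \<in> R \<Longrightarrow> j < w \<Longrightarrow> b j < b w"
  shows "(\<Sum>i\<in>alloc (SI U) phi1 b R \<inter> K. critical_bid (SI U) phi1 b R i)
     = (if w \<in> K then Max (insert 1 (b ` (R - {w}))) else 0)"
  using alloc_SI_pos[of U R w b, OF U w mx lst] crit_SI[of U R w b, OF U w mx lst] by auto

lemma sum_neg:
  assumes U: "finite U" "R \<subseteq> U" and lt: "\<And>j. j \<in> R \<Longrightarrow> b j < 1"
  shows "(\<Sum>i\<in>alloc (SI U) phi1 b R \<inter> K. critical_bid (SI U) phi1 b R i) = 0"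
  using alloc_SI_neg[OF U lt] by auto

lemma winner_v:
  assumes "n \<ge> 1"
  obtains w where "w < n" "\<And>j. j < n \<Longrightarrow> v j \<le> v w" "\<And>j. j < n \<Longrightarrow> j < w \<Longrightarrow> v j < v w"
    "Mx n v = v w"
proof -
  obtain w where w: "w \<in> {..<n}" "\<forall>j\<in>{..<n}. v j \<le> v w" "\<forall>j\<in>{..<n}. j < w \<longrightarrow> v j < v w"
    using exists_winner[of "{..<n}" v] assms by auto
  have "Mx n v = v w" unfolding Mx_def using w by (intro Max_eqI) auto
  then show ?thesis using that w by auto
qed

lemma Min_mm:
  assumes w: "w < n" "\<And>j. j < n \<Longrightarrow> v j \<le> v w" "1 \<le> v w"
  shows "Min (mm n v ` {..<n}) = mm n v w"
proof (rule Min_eqI)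
  show "finite (mm n v ` {..<n})" by auto
  show "mm n v w \<in> mm n v ` {..<n}" using w by auto
  fix y assume "y \<in> mm n v ` {..<n}"
  then obtain i where i: "i < n" "y = mm n v i" by auto
  show "mm n v w \<le> y"
  proof (cases "i = w")
    case True then show ?thesis using i by simp
  next
    case False
    have "mm n v w \<le> v w" unfolding mm_def using w by (auto simp: Max_le_iff)
    also have "v w \<le> mm n v i" unfolding mm_def using w False by (intro Max_ge) auto
    finally show ?thesis using i by simp
  qed
qed

lemma honest_fields: "nfake (honest n) = 0" "feas (honest n) = SI {..<n}" "vval (honest n) = phi1"
  "conceal (honest n) = (\<lambda>_. {})"
  unfolding honest_def SI_def by simp_all

lemma honest_rev:
  assumes n: "n \<ge> 1"
  shows "DRA_revenue n f (honest n) v = Hf n v"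
proof -
  define b where "b = bids n (honest n) v"
  have bv: "b j = v j" if "j < n" for j using that unfolding b_def bids_def by simp
  have rev: "DRA_revenue n f (honest n) v =
     (\<Sum>i\<in>alloc (SI {..<n}) phi1 b {..<n} \<inter> {..<n}. critical_bid (SI {..<n}) phi1 b {..<n} i)"
    unfolding DRA_revenue_def Let_def b_def revealed_def honest_fields by simp
  obtain w where w: "w < n" "\<And>j. j < n \<Longrightarrow> v j \<le> v w" "\<And>j. j < n \<Longrightarrow> j < w \<Longrightarrow> v j < v w"
    "Mx n v = v w" using winner_v[OF n] by blast
  show ?thesis
  proof (cases "1 \<le> v w")
    case True
    have "DRA_revenue n f (honest n) v = Max (insert 1 (b ` ({..<n} - {w})))"
    proof -
      have "b w = v w" using bv w by simp
      have m: "\<And>j. j \<in> {..<n} \<Longrightarrow> b j \<le> b w" using bv w by simp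
      have l: "\<And>j. j \<in> {..<n} \<Longrightarrow> j < w \<Longrightarrow> b j < b w" using bv w by simp
      show ?thesis unfolding rev
        by (subst sum_single[of "{..<n}" "{..<n}" w b, OF _ _ _ _ m l]) (use w True \<open>b w = v w\<close> in auto)
    qed
    also have "\<dots> = mm n v w" unfolding mm_def using bv by (intro arg_cong[where f=Max]) auto
    also have "\<dots> = Hf n v" unfolding Hf_def using w True Min_mm[of w n v] by auto
    finally show ?thesis .
  next
    case False
    have "DRA_revenue n f (honest n) v = 0"
    proof -
      have "\<And>j. j \<in> {..<n} \<Longrightarrow> b j < 1" using bv w False by (simp add: not_le) (meson le_less_trans)
      then show ?thesis unfolding rev by (intro sum_neg[of "{..<n}"]) auto
    qed
    then show ?thesis unfolding Hf_def using w False by auto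
  qed
qed


lemma dev_fields: "nfake (dev n e) = 1" "fakebid (dev n e) = (\<lambda>_. 1 + e)" "vval (dev n e) = phi1"
  "feas (dev n e) = SI {..<n+1}"
  "conceal (dev n e) = (\<lambda>v. if 1 \<le> Mx n v \<and> Mx n v \<le> 1 + e then {n} else {})"
  unfolding dev_def by simp_all

lemma dev_rev:
  assumes n: "n \<ge> 1" and e: "e > 0"
  shows "DRA_revenue n f (dev n e) v =
    (if 1 \<le> Mx n v \<and> Mx n v \<le> 1 + e then Hf n v - f
     else if 1 + e < Mx n v then max (1 + e) (Hf n v) else 0)"
proof -
  define b where "b = bids n (dev n e) v"
  have bv: "b j = v j" if "j < n" for j using that unfolding b_def bids_def by simp
  have bn: "b n = 1 + e" unfolding b_def bids_def dev_fields by simp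
  define R where "R = revealed n (dev n e) v"
  have rev: "DRA_revenue n f (dev n e) v =
     (\<Sum>i\<in>alloc (SI {..<n+1}) phi1 b R \<inter> {..<n}. critical_bid (SI {..<n+1}) phi1 b R i)
      - f * real (card (conceal (dev n e) v))"
    unfolding DRA_revenue_def Let_def b_def R_def dev_fields by simp
  obtain w where w: "w < n" "\<And>j. j < n \<Longrightarrow> v j \<le> v w" "\<And>j. j < n \<Longrightarrow> j < w \<Longrightarrow> v j < v w"
    "Mx n v = v w" using winner_v[OF n] by blast
  have fU: "finite {..<n+1}" by simp
  consider (C) "1 \<le> Mx n v \<and> Mx n v \<le> 1 + e" | (H) "1 + e < Mx n v" | (L) "Mx n v < 1" by linarith
  then show ?thesis
  proof cases
    case C
    have cc: "conceal (dev n e) v = {n}" using C unfolding dev_fields by simp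
    have RR: "R = {..<n}" unfolding R_def revealed_def cc dev_fields(1) by auto
    have m: "\<And>j. j \<in> {..<n} \<Longrightarrow> b j \<le> b w" using bv w by simp
    have l: "\<And>j. j \<in> {..<n} \<Longrightarrow> j < w \<Longrightarrow> b j < b w" using bv w by simp
    have "(\<Sum>i\<in>alloc (SI {..<n+1}) phi1 b R \<inter> {..<n}. critical_bid (SI {..<n+1}) phi1 b R i)
       = Max (insert 1 (b ` ({..<n} - {w})))"
      unfolding RR
      by (subst sum_single[of "{..<n+1}" "{..<n}" w b, OF _ _ _ _ m l]) (use w C bv in auto)
    also have "\<dots> = mm n v w" unfolding mm_def using bv by (intro arg_cong[where f=Max]) auto
    also have "\<dots> = Hf n v" unfolding Hf_def using w C Min_mm[of w n v] by auto
    finally have S: "(\<Sum>i\<in>alloc (SI {..<n+1}) phi1 b R \<inter> {..<n}. critical_bid (SI {..<n+1}) phi1 b R i) = Hf n v" .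
    have C1: "1 \<le> Mx n v" and C2: "Mx n v \<le> 1 + e" using C by auto
    show ?thesis unfolding rev cc S using C1 C2 by simp
  next
    case H
    have cc: "conceal (dev n e) v = {}" using H unfolding dev_fields by simp
    have RR: "R = {..<n+1}" unfolding R_def revealed_def cc dev_fields(1) by auto
    have m: "\<And>j. j \<in> {..<n+1} \<Longrightarrow> b j \<le> b w"
    proof -
      fix j assume "j \<in> {..<n+1}"
      then consider "j < n" | "j = n" by fastforce
      then show "b j \<le> b w" using bv w bn H by cases auto
    qed
    have l: "\<And>j. j \<in> {..<n+1} \<Longrightarrow> j < w \<Longrightarrow> b j < b w" using bv w by simp
    have "(\<Sum>i\<in>alloc (SI {..<n+1}) phi1 b R \<inter> {..<n}. critical_bid (SI {..<n+1}) phi1 b R i)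
       = Max (insert 1 (b ` ({..<n+1} - {w})))"
      unfolding RR
      by (subst sum_single[of "{..<n+1}" "{..<n+1}" w b, OF _ _ _ _ m l]) (use w H bv e in auto)
    also have "b ` ({..<n+1} - {w}) = insert (1 + e) (v ` ({..<n} - {w}))"
    proof -
      have "{..<n+1} - {w} = insert n ({..<n} - {w})" using w by auto
      then show ?thesis using bn bv by auto
    qed
    also have "Max (insert 1 (insert (1 + e) (v ` ({..<n} - {w}))))
        = max (1 + e) (mm n v w)" unfolding mm_def
      by (subst insert_commute) (subst Max_insert, auto)
    also have "mm n v w = Hf n v" unfolding Hf_def using w H e Min_mm[of w n v] by auto
    finally show ?thesis unfolding rev cc using H by simp
  next
    case L
    have cc: "conceal (dev n e) v = {}" using L unfolding dev_fields by simp
    have RR: "R = {..<n+1}" unfolding R_def revealed_def cc dev_fields(1) by auto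
    have m: "\<And>j. j \<in> {..<n+1} \<Longrightarrow> b j \<le> b n"
    proof -
      fix j assume "j \<in> {..<n+1}"
      then consider "j < n" | "j = n" by fastforce
      then show "b j \<le> b n" using bv w bn L e by cases (auto, smt (verit))
    qed
    have l: "\<And>j. j \<in> {..<n+1} \<Longrightarrow> j < n \<Longrightarrow> b j < b n" using bv w bn L e
      by simp (smt (verit))
    have "(\<Sum>i\<in>alloc (SI {..<n+1}) phi1 b R \<inter> {..<n}. critical_bid (SI {..<n+1}) phi1 b R i) = 0"
      unfolding RR
      by (subst sum_single[of "{..<n+1}" "{..<n+1}" n b, OF _ _ _ _ m l]) (use bn e in auto)
    then show ?thesis unfolding rev cc Hf_def using L e by simp
  qed
qed

abbreviation PP :: "nat \<Rightarrow> (nat \<Rightarrow> real) measure" where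
  "PP n \<equiv> PiM {..<n} (\<lambda>_. exp1)"

lemma ps_exp1: "prob_space exp1"
  using prob_space_exponential_density[of 1] by simp

lemma ps_PP: "prob_space (PP n)"
  by (rule prob_space_PiM) (rule ps_exp1)

lemma sets_exp1: "sets exp1 = sets borel" by simp

lemma comp_meas: "i < n \<Longrightarrow> (\<lambda>v. v i) \<in> borel_measurable (PP n)"
  using measurable_component_singleton[of i "{..<n}" "\<lambda>_. exp1"]
  by (simp add: measurable_cong_sets[OF refl sets_exp1])

lemma Max_ins1_meas:
  assumes "finite X" "\<And>j. j \<in> X \<Longrightarrow> (\<lambda>v. v j) \<in> borel_measurable M"
  shows "(\<lambda>v. Max (insert (1::real) (v ` X))) \<in> borel_measurable M"
  using assms
proof (induction X rule: finite_induct)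
  case empty then show ?case by simp
next
  case (insert a X)
  have eq: "(\<lambda>v. Max (insert (1::real) (v ` insert a X))) = (\<lambda>v. max (v a) (Max (insert 1 (v ` X))))"
  proof
    fix v :: "'a \<Rightarrow> real"
    have "insert 1 (v ` insert a X) = insert (v a) (insert 1 (v ` X))" by auto
    then show "Max (insert (1::real) (v ` insert a X)) = max (v a) (Max (insert 1 (v ` X)))"
      using insert(1) by simp
  qed
  show ?case unfolding eq using insert by (intro borel_measurable_max) auto
qed

lemma mm_meas: "(\<lambda>v. mm n v i) \<in> borel_measurable (PP n)"
  unfolding mm_def by (rule Max_ins1_meas) (auto intro: comp_meas)

lemma Mx_meas: "(\<lambda>v. Mx n v) \<in> borel_measurable (PP n)"
  unfolding Mx_def by (rule borel_measurable_Max) (auto intro: comp_meas)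

lemma Hf_meas: "(\<lambda>v. Hf n v) \<in> borel_measurable (PP n)"
  unfolding Hf_def
  using Mx_meas[of n] borel_measurable_Min[of "{..<n}" "\<lambda>i v. mm n v i", OF _ mm_meas]
  by measurable

lemma int_exp1: "integrable exp1 (\<lambda>x. x)"
proof -
  have d: "distributed exp1 lborel (\<lambda>x. x) (erlang_density 0 1)"
    unfolding distributed_def by (simp add: distr_id2)
  show ?thesis
    using prob_space.erlang_ith_moment_integrable[OF ps_exp1, of 1 "\<lambda>x. x" 0 1] d by simp
qed

lemma int_comp: "i < n \<Longrightarrow> integrable (PP n) (\<lambda>v. v i)"
proof -
  assume i: "i < n"
  have "distr (PP n) exp1 (\<lambda>v. v i) = exp1"
    using i by (intro distr_PiM_component ps_exp1) auto
  then have "integrable (distr (PP n) exp1 (\<lambda>v. v i)) (\<lambda>x. x)" using int_exp1 by simp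
  then show ?thesis
    using i by (subst (asm) integrable_distr_eq) (auto intro: measurable_component_singleton)
qed


definition Dv :: "nat \<Rightarrow> real \<Rightarrow> real \<Rightarrow> (nat \<Rightarrow> real) \<Rightarrow> real" where
  "Dv n f e v = (if 1 \<le> Mx n v \<and> Mx n v \<le> 1 + e then Hf n v - f
     else if 1 + e < Mx n v then max (1 + e) (Hf n v) else 0)"

definition IA :: "real \<Rightarrow> nat \<Rightarrow> nat \<Rightarrow> real set" where
  "IA e i j = (if j = i then {1 + e<..} else {..1})"
definition IB :: "real \<Rightarrow> nat \<Rightarrow> nat \<Rightarrow> real set" where
  "IB e i j = (if j = i then {1..1 + e} else {..1 + e})"

definition inA where "inA n e i v \<longleftrightarrow> (\<forall>j<n. v j \<in> IA e i j)"
definition inB where "inB n e i v \<longleftrightarrow> (\<forall>j<n. v j \<in> IB e i j)"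

lemma Hf_bound:
  assumes n: "n \<ge> 1"
  shows "0 \<le> Hf n v \<and> Hf n v \<le> 1 + (\<Sum>i<n. \<bar>v i\<bar>)"
proof (cases "1 \<le> Mx n v")
  case True
  have S0: "0 \<le> (\<Sum>i<n. \<bar>v i\<bar>)" by (intro sum_nonneg) auto
  have mm1: "1 \<le> mm n v i" for i unfolding mm_def by (intro Max_ge) auto
  have "Min (mm n v ` {..<n}) \<le> mm n v 0" using n by (intro Min_le) auto
  also have "mm n v 0 \<le> 1 + (\<Sum>i<n. \<bar>v i\<bar>)"
    unfolding mm_def
  proof (subst Max_le_iff, simp, simp, intro ballI)
    fix y assume "y \<in> insert 1 (v ` ({..<n} - {0}))"
    then consider "y = 1" | j where "j < n" "y = v j" by auto
    then show "y \<le> 1 + (\<Sum>i<n. \<bar>v i\<bar>)"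
    proof cases
      case 1 then show ?thesis using S0 by simp
    next
      case 2
      have "\<bar>v j\<bar> \<le> (\<Sum>i<n. \<bar>v i\<bar>)" using 2 by (intro member_le_sum) auto
      then show ?thesis using 2 by simp
    qed
  qed
  finally have "Hf n v \<le> 1 + (\<Sum>i<n. \<bar>v i\<bar>)" unfolding Hf_def using True by simp
  moreover have "0 \<le> Hf n v"
  proof -
    have "\<forall>a\<in>mm n v ` {..<n}. 0 \<le> a" using mm1 by (auto intro: order_trans[OF zero_le_one])
    moreover have "0 \<in> {..<n}" using n by simp
    ultimately have "0 \<le> Min (mm n v ` {..<n})" by (subst Min_ge_iff) auto
    then show ?thesis unfolding Hf_def using True by simp
  qed
  ultimately show ?thesis by simp
next
  case False
  have S0: "0 \<le> (\<Sum>i<n. \<bar>v i\<bar>)" by (intro sum_nonneg) auto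
  then show ?thesis unfolding Hf_def using False by simp
qed

lemma int_bound: "integrable (PP n) (\<lambda>v. c + (\<Sum>i<n. \<bar>v i\<bar>))"
proof -
  interpret prob_space "PP n" by (rule ps_PP)
  have "integrable (PP n) (\<lambda>v. \<Sum>i<n. \<bar>v i\<bar>)"
    by (rule Bochner_Integration.integrable_sum) (auto intro: integrable_abs int_comp)
  then show ?thesis by (intro Bochner_Integration.integrable_add integrable_const) auto
qed

lemma int_Hf: assumes "n \<ge> 1" shows "integrable (PP n) (Hf n)"
proof (rule Bochner_Integration.integrable_bound[OF int_bound[of n 1]])
  show "Hf n \<in> borel_measurable (PP n)" using Hf_meas[of n] by simp
  show "AE x in PP n. norm (Hf n x) \<le> norm (1 + (\<Sum>i<n. \<bar>x i\<bar>))"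
    using Hf_bound[OF assms] by (intro AE_I2) (smt (verit) real_norm_def)
qed

lemma Dv_meas: "Dv n f e \<in> borel_measurable (PP n)"
  unfolding Dv_def using Hf_meas[of n] Mx_meas[of n] by measurable

lemma int_Dv: assumes "n \<ge> 1" shows "integrable (PP n) (Dv n f e)"
proof (rule Bochner_Integration.integrable_bound[OF int_bound[of n "\<bar>f\<bar> + \<bar>1 + e\<bar> + 1"]])
  show "Dv n f e \<in> borel_measurable (PP n)" by (rule Dv_meas)
  show "AE x in PP n. norm (Dv n f e x) \<le> norm (\<bar>f\<bar> + \<bar>1 + e\<bar> + 1 + (\<Sum>i<n. \<bar>x i\<bar>))"
  proof (intro AE_I2)
    fix x
    have "0 \<le> Hf n x" "Hf n x \<le> 1 + (\<Sum>i<n. \<bar>x i\<bar>)" using Hf_bound[OF assms] by auto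
    moreover have "0 \<le> (\<Sum>i<n. \<bar>x i\<bar>)" by (intro sum_nonneg) auto
    ultimately show "norm (Dv n f e x) \<le> norm (\<bar>f\<bar> + \<bar>1 + e\<bar> + 1 + (\<Sum>i<n. \<bar>x i\<bar>))"
      unfolding Dv_def by (simp split: if_splits) (smt (verit))
  qed
qed

lemma pointwise:
  assumes n: "n \<ge> 1" and e: "e > 0" and g: "f \<le> g" "0 \<le> g"
  shows "e * (\<Sum>i<n. if inA n e i v then 1 else 0) - g * (\<Sum>i<n. if inB n e i v then 1 else 0)
     \<le> Dv n f e v - Hf n v"
proof -
  obtain w where w: "w < n" "\<And>j. j < n \<Longrightarrow> v j \<le> v w" "\<And>j. j < n \<Longrightarrow> j < w \<Longrightarrow> v j < v w"
    "Mx n v = v w" using winner_v[OF n] by blast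
  consider (C) "1 \<le> Mx n v \<and> Mx n v \<le> 1 + e" | (H) "1 + e < Mx n v" | (L) "Mx n v < 1" by linarith
  then show ?thesis
  proof cases
    case C
    have nA: "\<not> inA n e i v" if "i < n" for i
    proof
      assume "inA n e i v"
      then have "v i > 1 + e" using that unfolding inA_def IA_def by auto
      moreover have "v i \<le> v w" using w that by auto
      ultimately show False using C w by simp
    qed
    have le: "v j \<le> 1 + e" if "j < n" for j using w(2)[OF that] C w(4) by linarith
    have Bw: "inB n e w v" unfolding inB_def IB_def using C w le by auto
    have "(if inB n e w v then 1 else 0) \<le> (\<Sum>i<n. if inB n e i v then 1 else (0::real))"
      using w by (intro member_le_sum) auto
    then have SB: "1 \<le> (\<Sum>i<n. if inB n e i v then 1 else (0::real))" using Bw by simp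
    have SA: "(\<Sum>i<n. if inA n e i v then 1 else (0::real)) = 0" using nA by (intro sum.neutral) auto
    have "Dv n f e v - Hf n v = - f" unfolding Dv_def using C by simp
    moreover have "g * 1 \<le> g * (\<Sum>i<n. if inB n e i v then 1 else (0::real))"
      using SB g by (intro mult_left_mono) auto
    ultimately show ?thesis unfolding SA using g by simp
  next
    case H
    have nB: "\<not> inB n e i v" if "i < n" for i
    proof
      assume "inB n e i v"
      then have "v w \<in> IB e i w" using w unfolding inB_def by auto
      then show False using H w e unfolding IB_def by (auto split: if_splits)
    qed
    have SB: "(\<Sum>i<n. if inB n e i v then 1 else (0::real)) = 0" using nB by (intro sum.neutral) auto
    have D0: "Dv n f e v - Hf n v = max (1 + e) (Hf n v) - Hf n v" unfolding Dv_def using H e by simp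
    show ?thesis
    proof (cases "\<exists>i<n. inA n e i v")
      case True
      then obtain i where i: "i < n" "inA n e i v" by blast
      have vi: "v i > 1 + e" using i unfolding inA_def IA_def by auto
      have oth: "v j \<le> 1" if "j < n" "j \<noteq> i" for j using i that unfolding inA_def IA_def by auto
      have iff: "inA n e k v \<longleftrightarrow> k = i" if "k < n" for k
      proof
        assume "inA n e k v"
        then have "k \<noteq> i \<Longrightarrow> v i \<le> 1" using i unfolding inA_def IA_def by auto
        then show "k = i" using vi e by force
      qed (use i in simp)
      have SA: "(\<Sum>k<n. if inA n e k v then 1 else (0::real)) = 1"
      proof -
        have "(\<Sum>k<n. if inA n e k v then 1 else (0::real)) = (\<Sum>k<n. if k = i then 1 else 0)"
          using iff by (intro sum.cong) auto
        also have "\<dots> = 1" using i by simp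
        finally show ?thesis .
      qed
      have wi: "w = i"
      proof (rule ccontr)
        assume "w \<noteq> i" then have "v w \<le> 1" using oth w by auto
        moreover have "v i \<le> v w" using w i by auto
        ultimately show False using vi e by simp
      qed
      have "Hf n v = mm n v w" unfolding Hf_def using w H e Min_mm[of w n v] by auto
      also have "mm n v w = 1" unfolding mm_def using oth wi by (intro Max_eqI) auto
      finally have "Hf n v = 1" .
      then show ?thesis unfolding D0 SA SB using e by simp
    next
      case False
      then have SA: "(\<Sum>k<n. if inA n e k v then 1 else (0::real)) = 0" by (intro sum.neutral) auto
      show ?thesis unfolding D0 SA SB by simp
    qed
  next
    case L
    have nA: "\<not> inA n e i v" if "i < n" for i
    proof
      assume "inA n e i v"
      then have "v i > 1 + e" using that unfolding inA_def IA_def by auto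
      moreover have "v i \<le> v w" using w that by auto
      ultimately show False using L w e by simp
    qed
    have nB: "\<not> inB n e i v" if "i < n" for i
    proof
      assume "inB n e i v"
      then have "v i \<ge> 1" using that unfolding inB_def IB_def by auto
      moreover have "v i \<le> v w" using w that by auto
      ultimately show False using L w e by simp
    qed
    have SA: "(\<Sum>k<n. if inA n e k v then 1 else (0::real)) = 0" using nA by (intro sum.neutral) auto
    have SB: "(\<Sum>k<n. if inB n e k v then 1 else (0::real)) = 0" using nB by (intro sum.neutral) auto
    have "Dv n f e v - Hf n v = 0" unfolding Dv_def Hf_def using L e by simp
    then show ?thesis unfolding SA SB by simp
  qed
qed

lemma me_le: "0 \<le> a \<Longrightarrow> measure exp1 {..a} = 1 - exp (- a)"
proof -
  assume a: "0 \<le> a"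
  have "emeasure exp1 {..a} = ennreal (erlang_CDF 0 1 a)" by (rule emeasure_erlang_density) simp
  then show ?thesis using a by (simp add: measure_def erlang_CDF_0)
qed

lemma me_gt: "0 \<le> a \<Longrightarrow> measure exp1 {a<..} = exp (- a)"
proof -
  assume a: "0 \<le> a"
  interpret prob_space exp1 by (rule ps_exp1)
  have "UNIV - {..a} = {a<..}" by auto
  then have "measure exp1 {a<..} = 1 - measure exp1 {..a}"
    using prob_compl[of "{..a}"] by simp
  then show ?thesis using me_le[OF a] by simp
qed

lemma me_single: "measure exp1 {x} = 0"
proof -
  have "AE t in lborel. t \<in> {x} \<longrightarrow> ennreal (exponential_density 1 t) = 0"
    using AE_lborel_singleton[of x] by (rule eventually_mono) auto
  then have "{x} \<in> null_sets exp1"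
    by (subst null_sets_density_iff) auto
  then show ?thesis by (rule measure_eq_0_null_sets)
qed

lemma me_Icc: "1 \<le> b \<Longrightarrow> measure exp1 {1..b} = exp (- 1) - exp (- b)"
proof -
  assume b: "1 \<le> b"
  interpret prob_space exp1 by (rule ps_exp1)
  have "{1..b} = ({..b} - {..1}) \<union> {1::real}" using b by auto
  moreover have "measure exp1 (({..b} - {..1}) \<union> {1::real}) = measure exp1 ({..b} - {..1}) + measure exp1 {1::real}"
    by (rule finite_measure_Union) auto
  ultimately have "measure exp1 {1..b} = measure exp1 ({..b} - {..1}) + measure exp1 {1::real}"
    by simp
  also have "measure exp1 ({..b} - {..1}) = measure exp1 {..b} - measure exp1 {..1::real}"
    using b by (intro finite_measure_Diff) auto
  finally show ?thesis using b by (simp add: me_single me_le)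
qed

lemma prod_if_single:
  assumes "i < n"
  shows "(\<Prod>j<n. if j = i then a else b) = a * (b::real) ^ (n - 1)"
proof -
  have "(\<Prod>j<n. if j = i then a else b) = (if i = i then a else b) * (\<Prod>j\<in>{..<n} - {i}. if j = i then a else b)"
    using assms by (subst prod.remove[of _ i]) auto
  also have "(\<Prod>j\<in>{..<n} - {i}. if j = i then a else b) = (\<Prod>j\<in>{..<n} - {i}. b)"
    by (intro prod.cong) auto
  also have "\<dots> = b ^ (n - 1)" using assms by simp
  finally show ?thesis by simp
qed

lemma box_meas:
  assumes "\<And>j. j < n \<Longrightarrow> S j \<in> sets borel"
  shows "measure (PP n) (PiE {..<n} S) = (\<Prod>j<n. measure exp1 (S j))"
proof -
  have sf: "sigma_finite_measure exp1" by (rule prob_space_imp_sigma_finite[OF ps_exp1])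
  interpret finite_product_prob_space "\<lambda>_. exp1" "{..<n}"
    unfolding finite_product_prob_space_def finite_product_sigma_finite_def product_prob_space_def
      product_prob_space_axioms_def product_sigma_finite_def finite_product_sigma_finite_axioms_def
    using sf ps_exp1 by simp
  show ?thesis using assms by (intro finite_measure_PiM_emb) auto
qed

lemma PA: assumes "i < n" "e > 0"
  shows "measure (PP n) (PiE {..<n} (IA e i)) = exp (- (1 + e)) * (1 - exp (- 1)) ^ (n - 1)"
proof -
  have "measure (PP n) (PiE {..<n} (IA e i)) = (\<Prod>j<n. measure exp1 (IA e i j))"
    by (rule box_meas) (auto simp: IA_def)
  also have "\<dots> = (\<Prod>j<n. if j = i then exp (- (1 + e)) else 1 - exp (- 1))"
    using assms by (intro prod.cong) (auto simp: IA_def me_le me_gt)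
  also have "\<dots> = exp (- (1 + e)) * (1 - exp (- 1)) ^ (n - 1)" by (rule prod_if_single[OF assms(1)])
  finally show ?thesis .
qed

lemma PB: assumes "i < n" "e > 0"
  shows "measure (PP n) (PiE {..<n} (IB e i)) = (exp (- 1) - exp (- (1 + e))) * (1 - exp (- (1 + e))) ^ (n - 1)"
proof -
  have "measure (PP n) (PiE {..<n} (IB e i)) = (\<Prod>j<n. measure exp1 (IB e i j))"
    by (rule box_meas) (auto simp: IB_def)
  also have "\<dots> = (\<Prod>j<n. if j = i then exp (- 1) - exp (- (1 + e)) else 1 - exp (- (1 + e)))"
    using assms by (intro prod.cong) (auto simp: IB_def me_le me_Icc)
  also have "\<dots> = (exp (- 1) - exp (- (1 + e))) * (1 - exp (- (1 + e))) ^ (n - 1)" by (rule prod_if_single[OF assms(1)])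
  finally show ?thesis .
qed

lemma space_PP: "space (PP n) = PiE {..<n} (\<lambda>_. UNIV)"
  by (simp add: space_PiM)

lemma ind_A: "v \<in> space (PP n) \<Longrightarrow> indicator (PiE {..<n} (IA e i)) v = (if inA n e i v then 1 else (0::real))"
  unfolding space_PP inA_def by (auto simp: indicator_def PiE_iff)

lemma ind_B: "v \<in> space (PP n) \<Longrightarrow> indicator (PiE {..<n} (IB e i)) v = (if inB n e i v then 1 else (0::real))"
  unfolding space_PP inB_def by (auto simp: indicator_def PiE_iff)

lemma valid_dev: "valid_strategy n (dev n e)"
proof -
  have m: "matroid {..<n+1} (SI {..<n+1})"
    unfolding matroid_def SI_def
  proof (intro conjI allI impI ballI)
    fix A B :: "nat set" assume "B \<in> {S. S \<subseteq> {..<n + 1} \<and> card S \<le> 1}" "A \<subseteq> B"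
    then show "A \<in> {S. S \<subseteq> {..<n + 1} \<and> card S \<le> 1}"
      using card_mono[of B A] finite_subset[of B "{..<n+1}"] by auto
  next
    fix A B :: "nat set" assume A: "A \<in> {S. S \<subseteq> {..<n + 1} \<and> card S \<le> 1}"
      and B: "B \<in> {S. S \<subseteq> {..<n + 1} \<and> card S \<le> 1}" and c: "card A < card B"
    have fA: "finite A" using A finite_subset[of A "{..<n+1}"] by auto
    have "card A = 0" using c B by auto
    then have A0: "A = {}" using fA by simp
    have "card B = 1" using c B by auto
    then obtain x where Bx: "B = {x}" by (rule card_1_singletonE)
    show "\<exists>x\<in>B - A. insert x A \<in> {S. S \<subseteq> {..<n + 1} \<and> card S \<le> 1}"
      using A0 Bx B by auto
  qed auto
  have c: "\<forall>S\<in>SI {..<n+1}. card (S \<inter> {..<n}) \<le> 1"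
  proof
    fix S assume "S \<in> SI {..<n+1}"
    then have "S \<subseteq> {..<n+1}" "card S \<le> 1" unfolding SI_def by auto
    moreover have "finite S" using \<open>S \<subseteq> {..<n+1}\<close> finite_subset by blast
    ultimately show "card (S \<inter> {..<n}) \<le> 1" using card_mono[of S "S \<inter> {..<n}"] by auto
  qed
  have mo: "mono (\<lambda>x::real. x - 1)" by (auto simp: mono_def)
  show ?thesis unfolding valid_strategy_def dev_fields using m c mo by auto
qed

lemma choose_e:
  fixes g :: real
  assumes g: "0 \<le> g" "g < 1"
  shows "\<exists>e>0. g * (1 - exp (- (1 + e))) ^ (n - 1) < exp (- e) * (1 - exp (- 1)) ^ (n - 1)"
proof -
  define c where "c = 1 - exp (- 1::real)"
  have c0: "0 < c" unfolding c_def by simp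
  define \<phi> where "\<phi> = (\<lambda>e::real. exp (- e) * c ^ (n - 1) - g * (1 - exp (- (1 + e))) ^ (n - 1))"
  have "(\<phi> \<longlongrightarrow> \<phi> 0) (at_right 0)"
    unfolding \<phi>_def by (intro tendsto_intros)
  moreover have "\<phi> 0 = (1 - g) * c ^ (n - 1)" unfolding \<phi>_def c_def by (simp add: algebra_simps)
  moreover have "0 < (1 - g) * c ^ (n - 1)" using g c0 by simp
  ultimately have "eventually (\<lambda>e. 0 < \<phi> e) (at_right 0)" by (metis order_tendstoD(1))
  then obtain b where b: "b > 0" "\<And>y. 0 < y \<Longrightarrow> y < b \<Longrightarrow> 0 < \<phi> y"
    unfolding eventually_at_right_field by auto
  have "0 < \<phi> (b / 2)" using b by auto
  then show ?thesis using b unfolding \<phi>_def c_def by (intro exI[of _ "b/2"]) auto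
qed

lemma final_ineq:
  fixes e g :: real
  assumes e: "e > 0" and g: "0 \<le> g"
    and ch: "g * (1 - exp (- (1 + e))) ^ (n - 1) < exp (- e) * (1 - exp (- 1)) ^ (n - 1)"
  shows "0 < e * (exp (- (1 + e)) * (1 - exp (- 1)) ^ (n - 1))
     - g * ((exp (- 1) - exp (- (1 + e))) * (1 - exp (- (1 + e))) ^ (n - 1))"
proof -
  define d where "d = (1 - exp (- (1 + e))) ^ (n - 1)"
  define c where "c = (1 - exp (- 1::real)) ^ (n - 1)"
  have "exp (- (1 + e)) \<le> exp 0" using e by (simp only: exp_le_cancel_iff)
  then have "exp (- (1 + e)) \<le> 1" by simp
  then have d0: "0 \<le> d" unfolding d_def by (intro zero_le_power) simp
  have ee: "exp (- (1 + e)) = exp (- 1) * exp (- e)" by (simp add: exp_add[symmetric])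
  have "1 - e \<le> exp (- e)" using exp_ge_add_one_self[of "- e"] by simp
  then have "exp (- 1) * (1 - exp (- e)) \<le> exp (- 1) * e"
    by (intro mult_left_mono) auto
  then have diff: "exp (- 1) - exp (- (1 + e)) \<le> exp (- 1) * e" unfolding ee
    by (simp add: right_diff_distrib)
  have "g * ((exp (- 1) - exp (- (1 + e))) * d) \<le> g * (exp (- 1) * e * d)"
    using g d0 diff by (intro mult_left_mono mult_right_mono) auto
  also have "\<dots> = exp (- 1) * e * (g * d)" by simp
  also have "\<dots> < exp (- 1) * e * (exp (- e) * c)"
    using ch e unfolding c_def d_def by (intro mult_strict_left_mono) auto
  also have "\<dots> = e * (exp (- (1 + e)) * c)" unfolding ee by simp
  finally show ?thesis unfolding c_def d_def by simp
qed

theorem mainTheorem6: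
  fixes n :: nat and f :: real
  assumes "n \<ge> 1" and "f < 1"
  shows "\<not> DRA_credible n f"
proof
  assume cred: "DRA_credible n f"
  have n: "n \<ge> 1" by fact
  define g where "g = max f 0"
  have g0: "0 \<le> g" and g1: "g < 1" and fg: "f \<le> g" using assms(2) unfolding g_def by auto
  obtain e where e: "e > 0"
    and ch: "g * (1 - exp (- (1 + e))) ^ (n - 1) < exp (- e) * (1 - exp (- 1)) ^ (n - 1)"
    using choose_e[OF g0 g1, of n] by blast
  interpret P: prob_space "PP n" by (rule ps_PP)
  have le: "expected_revenue n f (dev n e) \<le> expected_revenue n f (honest n)"
    using cred valid_dev[of n e] unfolding DRA_credible_def by blast
  have EH: "expected_revenue n f (honest n) = integral\<^sup>L (PP n) (Hf n)"
    unfolding expected_revenue_def honest_rev[OF n] by simp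
  have eqD: "(\<lambda>v. DRA_revenue n f (dev n e) v) = Dv n f e"
    by (rule ext) (simp add: dev_rev[OF n e] Dv_def)
  have ED: "expected_revenue n f (dev n e) = integral\<^sup>L (PP n) (Dv n f e)"
    unfolding expected_revenue_def eqD by simp
  define A where "A = (\<lambda>i. PiE {..<n} (IA e i))"
  define B where "B = (\<lambda>i. PiE {..<n} (IB e i))"
  have sA: "A i \<in> sets (PP n)" for i unfolding A_def by (intro sets_PiM_I_finite) (auto simp: IA_def)
  have sB: "B i \<in> sets (PP n)" for i unfolding B_def by (intro sets_PiM_I_finite) (auto simp: IB_def)
  have iA: "integrable (PP n) (indicator (A i) :: _ \<Rightarrow> real)" for i
    using sA by (intro integrable_real_indicator) (auto simp: P.emeasure_eq_measure)
  have iB: "integrable (PP n) (indicator (B i) :: _ \<Rightarrow> real)" for i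
    using sB by (intro integrable_real_indicator) (auto simp: P.emeasure_eq_measure)
  define L where "L = (\<lambda>v. e * (\<Sum>i<n. indicator (A i) v) - g * (\<Sum>i<n. indicator (B i) v) :: real)"
  have iL: "integrable (PP n) L"
    unfolding L_def using iA iB by (intro Bochner_Integration.integrable_diff integrable_mult_right
        Bochner_Integration.integrable_sum) auto
  have iD: "integrable (PP n) (\<lambda>v. Dv n f e v - Hf n v)"
    using int_Dv[OF n] int_Hf[OF n] by (rule Bochner_Integration.integrable_diff)
  have AS: "A i \<subseteq> space (PP n)" for i using sA by (rule sets.sets_into_space)
  have BS: "B i \<subseteq> space (PP n)" for i using sB by (rule sets.sets_into_space)
  have "integral\<^sup>L (PP n) L = e * (\<Sum>i<n. measure (PP n) (A i)) - g * (\<Sum>i<n. measure (PP n) (B i))"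
    unfolding L_def using iA iB AS BS
    by (simp add: Bochner_Integration.integral_diff Bochner_Integration.integral_sum
        Int_absorb2 integrable_mult_right)
  also have "(\<Sum>i<n. measure (PP n) (A i)) = (\<Sum>i<n. exp (- (1 + e)) * (1 - exp (- 1)) ^ (n - 1))"
    unfolding A_def using e by (intro sum.cong) (auto simp: PA)
  also have "(\<Sum>i<n. measure (PP n) (B i)) =
      (\<Sum>i<n. (exp (- 1) - exp (- (1 + e))) * (1 - exp (- (1 + e))) ^ (n - 1))"
    unfolding B_def using e by (intro sum.cong) (auto simp: PB)
  finally have IL: "integral\<^sup>L (PP n) L = real n * (e * (exp (- (1 + e)) * (1 - exp (- 1)) ^ (n - 1))
     - g * ((exp (- 1) - exp (- (1 + e))) * (1 - exp (- (1 + e))) ^ (n - 1)))"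
    by (simp add: algebra_simps)
  have "0 < integral\<^sup>L (PP n) L" unfolding IL using final_ineq[OF e g0 ch] n by simp
  also have "integral\<^sup>L (PP n) L \<le> integral\<^sup>L (PP n) (\<lambda>v. Dv n f e v - Hf n v)"
  proof (rule integral_mono[OF iL iD])
    fix v assume v: "v \<in> space (PP n)"
    have "L v = e * (\<Sum>i<n. if inA n e i v then 1 else 0) - g * (\<Sum>i<n. if inB n e i v then 1 else 0)"
      unfolding L_def A_def B_def using ind_A[OF v] ind_B[OF v] by simp
    also have "\<dots> \<le> Dv n f e v - Hf n v" by (rule pointwise[OF n e fg g0])
    finally show "L v \<le> Dv n f e v - Hf n v" .
  qed
  also have "\<dots> = integral\<^sup>L (PP n) (Dv n f e) - integral\<^sup>L (PP n) (Hf n)"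
    using int_Dv[OF n] int_Hf[OF n] by (rule Bochner_Integration.integral_diff)
  finally show False using le EH ED by simp
qed

end
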